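(* For every $n\ge1$, the following map is a bijection from $\mathrm{PST}_n$ to $\mathcal A_n$: given $t\in\mathrm{PST}_n$, delete every middle edge of $t$, delete the root of $t$ together with all edges from the root to its children, discard the isolated vertex that was the rightmost leaf of $t$, and label the remaining $n$ leaves of $t$ by $1,\dots,n$ from left to right. (The resulting components, each rooted at its topmost vertex, are binary trees forming an element of $\mathcal A_n$.)
   Context: A reduced plane tree is a rooted plane tree in which every internal node has at least two children; its weight is its number of leaves minus 1. A reduced plane tree with at least two leaves is prime if the rightmost child of its root is a leaf; $\mathrm{PST}_n$ is the set of prime reduced plane trees of weight $n$ (so with $n+1$ leaves). A middle edge of a tree is an edge from an internal vertex $v$ to a child of $v$ which is neither the leftmost nor the rightmost child of $v$. A binary tree is a plane rooted tree whose internal nodes all have exactly two children (a single leaf is allowed). A noncrossing arrangement of binary trees on $[n]$ is a set of binary trees whose leaves are labeled by $1,\dots,n$, each label used exactly once, with the leaves of each tree labeled increasingly from left to right, such that the canonical drawing (leaves placed at the points $1,\dots,n$ of a line, trees drawn above it) has no crossing, i.e. the sets of leaf labels of the trees form a noncrossing partition of $[n]$. $\mathcal A_n$ denotes the set of such arrangements. *)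

theory Defs
  imports Main
begin

datatype ptree = Nd "ptree list"

fun nleaves :: "ptree \<Rightarrow> nat" where
  "nleaves (Nd []) = 1"
| "nleaves (Nd (c # cs)) = sum_list (map nleaves (c # cs))"

fun reduced :: "ptree \<Rightarrow> bool" where
  "reduced (Nd cs) = (cs = [] \<or> (2 \<le> length cs \<and> list_all reduced cs))"

definition weight :: "ptree \<Rightarrow> nat" where
  "weight t = nleaves t - 1"

definition prime_tree :: "ptree \<Rightarrow> bool" where
  "prime_tree t = (2 \<le> nleaves t \<and> (case t of Nd cs \<Rightarrow> cs \<noteq> [] \<and> last cs = Nd []))"

definition PST :: "nat \<Rightarrow> ptree set" where
  "PST n = {t. reduced t \<and> prime_tree t \<and> weight t = n}"

datatype ltree = LLeaf nat | LNode "ltree list"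

fun lab :: "ptree \<Rightarrow> nat \<Rightarrow> ltree"
and labl :: "ptree list \<Rightarrow> nat \<Rightarrow> ltree list" where
  "lab (Nd []) k = LLeaf k"
| "lab (Nd (c # cs)) k = LNode (labl (c # cs) k)"
| "labl [] k = []"
| "labl (c # cs) k = lab c k # labl cs (k + nleaves c)"

datatype btree = BLeaf nat | BNode btree btree

fun bleaves :: "btree \<Rightarrow> nat list" where
  "bleaves (BLeaf a) = [a]"
| "bleaves (BNode l r) = bleaves l @ bleaves r"

definition arrangement :: "nat \<Rightarrow> btree set \<Rightarrow> bool" where
  "arrangement n A \<longleftrightarrow>
     (\<forall>T\<in>A. sorted_wrt (<) (bleaves T)) \<and>
     (\<Union>T\<in>A. set (bleaves T)) = {1..n} \<and>
     (\<forall>T1\<in>A. \<forall>T2\<in>A. T1 \<noteq> T2 \<longrightarrow> set (bleaves T1) \<inter> set (bleaves T2) = {}) \<and>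
     (\<forall>T1\<in>A. \<forall>T2\<in>A. T1 \<noteq> T2 \<longrightarrow>
        \<not> (\<exists>a b c d. a < b \<and> b < c \<and> c < d \<and>
              a \<in> set (bleaves T1) \<and> c \<in> set (bleaves T1) \<and>
              b \<in> set (bleaves T2) \<and> d \<in> set (bleaves T2)))"

definition Arr :: "nat \<Rightarrow> btree set set" where
  "Arr n = {A. arrangement n A}"

text \<open>spine t: the component containing the root of t after deleting all middle
  edges of t, i.e. the root with (recursively) only its leftmost and rightmost
  child kept.\<close>
fun spine :: "ltree \<Rightarrow> btree"
and lastsp :: "ltree list \<Rightarrow> btree" where
  "spine (LLeaf a) = BLeaf a"
| "spine (LNode []) = BLeaf 0"
| "spine (LNode (c # cs)) = BNode (spine c) (lastsp (c # cs))"
| "lastsp [] = BLeaf 0"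
| "lastsp [c] = spine c"
| "lastsp (c # d # cs) = lastsp (d # cs)"

text \<open>inner t: the components, other than the one containing the root of t,
  obtained by deleting all middle edges inside t.\<close>
fun inner :: "ltree \<Rightarrow> btree set"
and innerl :: "ltree list \<Rightarrow> btree set" where
  "inner (LLeaf a) = {}"
| "inner (LNode cs) = innerl cs \<union> set (map spine (butlast (tl cs)))"
| "innerl [] = {}"
| "innerl (c # cs) = inner c \<union> innerl cs"

text \<open>Leaves labelled 1,2,... from left to right; the root's children other than
  the rightmost one each give a family of components; the rightmost child
  (a leaf, labelled n+1) is discarded.\<close>
definition phi :: "ptree \<Rightarrow> btree set" where
  "phi t = (case lab t 1 of
              LLeaf _ \<Rightarrow> {}
            | LNode ls \<Rightarrow> (\<Union>c\<in>set (butlast ls). insert (spine c) (inner c)))"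

end

theory Submission
  imports Defs
begin

definition lv :: "btree \<Rightarrow> nat set" where "lv T = set (bleaves T)"
definition cross :: "nat set \<Rightarrow> nat set \<Rightarrow> bool" where
  "cross X Y \<longleftrightarrow> (\<exists>a b c d. a < b \<and> b < c \<and> c < d \<and> a \<in> X \<and> c \<in> X \<and> b \<in> Y \<and> d \<in> Y)"
definition gd :: "btree set \<Rightarrow> bool" where
  "gd A \<longleftrightarrow> (\<forall>T\<in>A. sorted_wrt (<) (bleaves T)) \<and>
     (\<forall>T1\<in>A. \<forall>T2\<in>A. T1 \<noteq> T2 \<longrightarrow> lv T1 \<inter> lv T2 = {}) \<and>
     (\<forall>T1\<in>A. \<forall>T2\<in>A. T1 \<noteq> T2 \<longrightarrow> \<not> cross (lv T1) (lv T2))"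
definition LV :: "btree set \<Rightarrow> nat set" where "LV A = (\<Union>T\<in>A. lv T)"

lemma LV_simps[simp]: "LV {} = {}" "LV (insert T A) = lv T \<union> LV A" "LV (A \<union> B) = LV A \<union> LV B"
  by (auto simp: LV_def)

lemma bleaves_ne: "bleaves T \<noteq> []"
  by (induction T) auto

lemma lv_ne[simp]: "lv T \<noteq> {}"
  using bleaves_ne by (simp add: lv_def)

lemma lv_BNode[simp]: "lv (BNode L R) = lv L \<union> lv R" "lv (BLeaf a) = {a}"
  by (auto simp: lv_def)

lemma sorted_BNode: "sorted_wrt (<) (bleaves (BNode L R)) \<longleftrightarrow>
   sorted_wrt (<) (bleaves L) \<and> sorted_wrt (<) (bleaves R) \<and> (\<forall>x\<in>lv L. \<forall>y\<in>lv R. x < y)"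
  by (auto simp: sorted_wrt_append lv_def)

lemma arrangement_gd: "arrangement n A \<longleftrightarrow> gd A \<and> LV A = {1..n}"
  unfolding arrangement_def gd_def LV_def lv_def cross_def by blast

lemma cross_mono: "cross X Y \<Longrightarrow> X \<subseteq> X' \<Longrightarrow> Y \<subseteq> Y' \<Longrightarrow> cross X' Y'"
  unfolding cross_def by blast

lemma cross_sep: "X \<subseteq> {..<m} \<Longrightarrow> Y \<subseteq> {m..} \<Longrightarrow> \<not> cross X Y \<and> \<not> cross Y X"
  unfolding cross_def by (auto, (meson atLeast_iff lessThan_iff less_trans not_less subsetD)+)

lemma gd_mono: "gd A \<Longrightarrow> B \<subseteq> A \<Longrightarrow> gd B"
  unfolding gd_def by blast

lemma gd_union: "gd A \<Longrightarrow> gd B \<Longrightarrow> LV A \<subseteq> {..<m} \<Longrightarrow> LV B \<subseteq> {m..} \<Longrightarrow> gd (A \<union> B)"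
proof -
  assume a: "gd A" "gd B" "LV A \<subseteq> {..<m}" "LV B \<subseteq> {m..}"
  have s: "\<And>T1 T2. T1 \<in> A \<Longrightarrow> T2 \<in> B \<Longrightarrow> lv T1 \<inter> lv T2 = {} \<and> \<not> cross (lv T1) (lv T2) \<and> \<not> cross (lv T2) (lv T1)"
  proof -
    fix T1 T2 assume "T1 \<in> A" "T2 \<in> B"
    hence "lv T1 \<subseteq> {..<m}" "lv T2 \<subseteq> {m..}" using a by (auto simp: LV_def)
    thus "lv T1 \<inter> lv T2 = {} \<and> \<not> cross (lv T1) (lv T2) \<and> \<not> cross (lv T2) (lv T1)"
      using cross_sep by fastforce
  qed
  show ?thesis using a(1,2) s unfolding gd_def
    by (metis Int_commute Un_iff)
qed

lemma gd_insert: "gd B \<Longrightarrow> sorted_wrt (<) (bleaves N) \<Longrightarrow>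
  (\<forall>T\<in>B. lv T \<inter> lv N = {} \<and> \<not> cross (lv N) (lv T) \<and> \<not> cross (lv T) (lv N)) \<Longrightarrow> gd (insert N B)"
  unfolding gd_def by (metis Int_commute insert_iff)

lemma gd_replace: "gd A \<Longrightarrow> T0 \<in> A \<Longrightarrow> lv L \<subseteq> lv T0 \<Longrightarrow> sorted_wrt (<) (bleaves L) \<Longrightarrow>
  B \<subseteq> A - {T0} \<Longrightarrow> gd (insert L B)"
proof -
  assume a: "gd A" "T0 \<in> A" "lv L \<subseteq> lv T0" "sorted_wrt (<) (bleaves L)" "B \<subseteq> A - {T0}"
  show ?thesis
  proof (rule gd_insert)
    show "gd B" using a gd_mono by blast
    show "sorted_wrt (<) (bleaves L)" by fact
    show "\<forall>T\<in>B. lv T \<inter> lv L = {} \<and> \<not> cross (lv L) (lv T) \<and> \<not> cross (lv T) (lv L)"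
    proof
      fix T assume "T \<in> B"
      hence "T \<in> A" "T \<noteq> T0" using a by auto
      hence "lv T \<inter> lv T0 = {}" "\<not> cross (lv T0) (lv T)" "\<not> cross (lv T) (lv T0)"
        using a unfolding gd_def by auto
      thus "lv T \<inter> lv L = {} \<and> \<not> cross (lv L) (lv T) \<and> \<not> cross (lv T) (lv L)"
        using a(3) cross_mono by blast
    qed
  qed
qed

lemma nest: "gd A \<Longrightarrow> T0 \<in> A \<Longrightarrow> T \<in> A \<Longrightarrow> T \<noteq> T0 \<Longrightarrow> a \<in> lv T0 \<Longrightarrow> c \<in> lv T0 \<Longrightarrow>
  b \<in> lv T \<Longrightarrow> a < b \<Longrightarrow> b < c \<Longrightarrow> lv T \<subseteq> {a<..<c}"
proof
  fix v assume a: "gd A" "T0 \<in> A" "T \<in> A" "T \<noteq> T0" "a \<in> lv T0" "c \<in> lv T0"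
    "b \<in> lv T" "a < b" "b < c" and v: "v \<in> lv T"
  have d: "lv T \<inter> lv T0 = {}" "\<not> cross (lv T0) (lv T)" "\<not> cross (lv T) (lv T0)"
    using a unfolding gd_def by auto
  have "v \<noteq> a" "v \<noteq> c" using d a v by auto
  moreover have "\<not> v < a" using d(3) a v unfolding cross_def by blast
  moreover have "\<not> v > c" using d(2) a v unfolding cross_def by blast
  ultimately show "v \<in> {a<..<c}" by auto
qed

lemma gd_merge:
  assumes g1: "gd (insert L A1)" and g2: "gd A2" and g3: "gd (insert R A3)"
    and l1: "LV (insert L A1) \<subseteq> {k..<ka}" and l2: "LV A2 \<subseteq> {ka..<kb}"
    and l3: "LV (insert R A3) \<subseteq> {kb..<e}"
    and d1: "\<forall>T\<in>A1. lv T \<inter> lv L = {}" and d3: "\<forall>T\<in>A3. lv T \<inter> lv R = {}"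
    and xL: "ka - 1 \<in> lv L" and yR: "kb \<in> lv R" and kk: "ka \<le> kb"
  shows "gd (insert (BNode L R) (A1 \<union> A2 \<union> A3)) \<and> (\<forall>T\<in>A1 \<union> A2 \<union> A3. lv T \<inter> lv (BNode L R) = {})"
proof -
  have sL: "lv L \<subseteq> {k..<ka}" and sR: "lv R \<subseteq> {kb..<e}" using l1 l3 by auto
  have s1: "\<And>T. T \<in> A1 \<Longrightarrow> lv T \<subseteq> {k..<ka}" using l1 by (auto simp: LV_def)
  have s2: "\<And>T. T \<in> A2 \<Longrightarrow> lv T \<subseteq> {ka..<kb}" using l2 by (auto simp: LV_def)
  have s3: "\<And>T. T \<in> A3 \<Longrightarrow> lv T \<subseteq> {kb..<e}" using l3 by (auto simp: LV_def)
  have nc1: "\<And>T. T \<in> A1 \<Longrightarrow> \<not> cross (lv L) (lv T) \<and> \<not> cross (lv T) (lv L)"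
  proof -
    fix T assume "T \<in> A1"
    moreover hence "T \<noteq> L" using d1 by auto
    ultimately show "\<not> cross (lv L) (lv T) \<and> \<not> cross (lv T) (lv L)" using g1 unfolding gd_def by auto
  qed
  have nc3: "\<And>T. T \<in> A3 \<Longrightarrow> \<not> cross (lv R) (lv T) \<and> \<not> cross (lv T) (lv R)"
  proof -
    fix T assume "T \<in> A3"
    moreover hence "T \<noteq> R" using d3 by auto
    ultimately show "\<not> cross (lv R) (lv T) \<and> \<not> cross (lv T) (lv R)" using g3 unfolding gd_def by auto
  qed
  have key: "\<forall>T\<in>A1 \<union> A2 \<union> A3. lv T \<inter> lv (BNode L R) = {} \<and> \<not> cross (lv (BNode L R)) (lv T) \<and> \<not> cross (lv T) (lv (BNode L R))"
  proof
    fix T assume T: "T \<in> A1 \<union> A2 \<union> A3"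
    show "lv T \<inter> lv (BNode L R) = {} \<and> \<not> cross (lv (BNode L R)) (lv T) \<and> \<not> cross (lv T) (lv (BNode L R))"
    proof (cases "T \<in> A1")
      case True
      note s = s1[OF True] and n = nc1[OF True]
      have "lv T \<inter> lv (BNode L R) = {}" using d1 True s sR kk by fastforce
      moreover have "\<not> cross (lv (BNode L R)) (lv T)"
      proof
        assume "cross (lv (BNode L R)) (lv T)"
        then obtain a b c d where o: "a < b" "b < c" "c < d" "a \<in> lv L \<union> lv R" "c \<in> lv L \<union> lv R" "b \<in> lv T" "d \<in> lv T"
          unfolding cross_def by auto
        have "c \<in> lv L" using o s sR kk by fastforce
        moreover have "a \<in> lv L" using o s sR kk by fastforce
        ultimately have "cross (lv L) (lv T)" using o unfolding cross_def by blast
        thus False using n by blast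
      qed
      moreover have "\<not> cross (lv T) (lv (BNode L R))"
      proof
        assume "cross (lv T) (lv (BNode L R))"
        then obtain a b c d where o: "a < b" "b < c" "c < d" "b \<in> lv L \<union> lv R" "d \<in> lv L \<union> lv R" "a \<in> lv T" "c \<in> lv T"
          unfolding cross_def by auto
        have bL: "b \<in> lv L" using o s sR kk by fastforce
        have "c < ka - 1"
        proof -
          have "c < ka" using o s by auto
          moreover have "c \<noteq> ka - 1" using o xL d1 True by auto
          ultimately show ?thesis by simp
        qed
        hence "cross (lv T) (lv L)" using o bL xL unfolding cross_def by blast
        thus False using n by blast
      qed
      ultimately show ?thesis by blast
    next
      case F1: False
      show ?thesis
      proof (cases "T \<in> A2")
        case True
        note s = s2[OF True]
        have "lv T \<inter> lv (BNode L R) = {}" using s sR sL by fastforce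
        moreover have "\<not> cross (lv (BNode L R)) (lv T)"
        proof
          assume "cross (lv (BNode L R)) (lv T)"
          then obtain a b c d where o: "a < b" "b < c" "c < d" "a \<in> lv L \<union> lv R" "c \<in> lv L \<union> lv R" "b \<in> lv T" "d \<in> lv T"
            unfolding cross_def by auto
          show False using o s sR sL by fastforce
        qed
        moreover have "\<not> cross (lv T) (lv (BNode L R))"
        proof
          assume "cross (lv T) (lv (BNode L R))"
          then obtain a b c d where o: "a < b" "b < c" "c < d" "b \<in> lv L \<union> lv R" "d \<in> lv L \<union> lv R" "a \<in> lv T" "c \<in> lv T"
            unfolding cross_def by auto
          show False using o s sR sL by fastforce
        qed
        ultimately show ?thesis by blast
      next
        case False
        hence T3: "T \<in> A3" using T F1 by auto
        note s = s3[OF T3] and n = nc3[OF T3]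
        have "lv T \<inter> lv (BNode L R) = {}" using d3 T3 s sL kk by fastforce
        moreover have "\<not> cross (lv (BNode L R)) (lv T)"
        proof
          assume "cross (lv (BNode L R)) (lv T)"
          then obtain a b c d where o: "a < b" "b < c" "c < d" "a \<in> lv L \<union> lv R" "c \<in> lv L \<union> lv R" "b \<in> lv T" "d \<in> lv T"
            unfolding cross_def by auto
          have cR: "c \<in> lv R" using o s sL kk by fastforce
          have "kb < b"
          proof -
            have "kb \<le> b" using o s by auto
            moreover have "b \<noteq> kb" using o yR d3 T3 by auto
            ultimately show ?thesis by simp
          qed
          hence "cross (lv R) (lv T)" using o cR yR unfolding cross_def by blast
          thus False using n by blast
        qed
        moreover have "\<not> cross (lv T) (lv (BNode L R))"
        proof
          assume "cross (lv T) (lv (BNode L R))"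
          then obtain a b c d where o: "a < b" "b < c" "c < d" "b \<in> lv L \<union> lv R" "d \<in> lv L \<union> lv R" "a \<in> lv T" "c \<in> lv T"
            unfolding cross_def by auto
          have "b \<in> lv R" using o s sL kk by fastforce
          moreover have "d \<in> lv R" using o s sL kk by fastforce
          ultimately have "cross (lv T) (lv R)" using o unfolding cross_def by blast
          thus False using n by blast
        qed
        ultimately show ?thesis by blast
      qed
    qed
  qed
  have g123: "gd (A1 \<union> A2 \<union> A3)"
  proof -
    have "gd (A1 \<union> A2)"
      by (rule gd_union[where m=ka]) (use g1 g2 l1 l2 gd_mono in auto)
    moreover have "LV (A1 \<union> A2) \<subseteq> {..<kb}" using l1 l2 kk by auto
    moreover have "gd A3" using g3 gd_mono by blast
    moreover have "LV A3 \<subseteq> {kb..}" using l3 by auto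
    ultimately show ?thesis using gd_union[of "A1 \<union> A2" A3 kb] by blast
  qed
  have "sorted_wrt (<) (bleaves (BNode L R))"
    unfolding sorted_BNode using g1 g3 sL sR kk unfolding gd_def by fastforce
  thus ?thesis using gd_insert[OF g123 _ key] key by blast
qed

definition snl :: "ptree list \<Rightarrow> nat" where "snl cs = sum_list (map nleaves cs)"

lemma snl_simps[simp]: "snl [] = 0" "snl (c # cs) = nleaves c + snl cs" "snl (xs @ ys) = snl xs + snl ys"
  by (auto simp: snl_def)

lemma nleaves_Nd: "cs \<noteq> [] \<Longrightarrow> nleaves (Nd cs) = snl cs"
  by (cases cs) (auto simp: snl_def)

lemma nleaves_pos: "1 \<le> nleaves t"
proof (induction t)
  case (Nd cs) thus ?case by (cases cs) (auto intro: le_trans[OF _ le_add1])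
qed

lemma lab_Nd: "cs \<noteq> [] \<Longrightarrow> lab (Nd cs) k = LNode (labl cs k)"
  by (cases cs) auto

lemma labl_append: "labl (xs @ ys) k = labl xs k @ labl ys (k + snl xs)"
  by (induction xs arbitrary: k) (auto simp: add.assoc)

definition sp :: "ptree \<Rightarrow> nat \<Rightarrow> btree" where "sp c k = spine (lab c k)"
definition inn :: "ptree \<Rightarrow> nat \<Rightarrow> btree set" where "inn c k = inner (lab c k)"
definition cmp :: "ptree \<Rightarrow> nat \<Rightarrow> btree set" where "cmp c k = insert (sp c k) (inn c k)"

fun forest :: "ptree list \<Rightarrow> nat \<Rightarrow> btree set" where
  "forest [] k = {}"
| "forest (c # cs) k = cmp c k \<union> forest cs (k + nleaves c)"

lemma forest_eq: "forest cs k = (\<Union>x\<in>set (labl cs k). insert (spine x) (inner x))"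
  by (induction cs arbitrary: k) (auto simp: cmp_def sp_def inn_def)

lemma lastsp_eq: "xs \<noteq> [] \<Longrightarrow> lastsp xs = spine (last xs)"
proof (induction xs)
  case (Cons x xs) thus ?case by (cases xs) auto
qed simp

lemma innerl_eq: "innerl xs = (\<Union>x\<in>set xs. inner x)"
  by (induction xs) auto

lemma lab_Nd3: "lab (Nd (c1 # mids @ [cm])) k =
   LNode (lab c1 k # labl mids (k + nleaves c1) @ [lab cm (k + nleaves c1 + snl mids)])"
  by (simp add: labl_append)

lemma sp_Nd3: "sp (Nd (c1 # mids @ [cm])) k = BNode (sp c1 k) (sp cm (k + nleaves c1 + snl mids))"
  unfolding sp_def lab_Nd3 by (simp add: lastsp_eq)

lemma inn_Nd3: "inn (Nd (c1 # mids @ [cm])) k =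
   inn c1 k \<union> forest mids (k + nleaves c1) \<union> inn cm (k + nleaves c1 + snl mids)"
  unfolding inn_def lab_Nd3 forest_eq by (auto simp: innerl_eq)

lemma sp_leaf[simp]: "sp (Nd []) k = BLeaf k" and inn_leaf[simp]: "inn (Nd []) k = {}"
  by (auto simp: sp_def inn_def)

lemma nleaves_Nd3: "nleaves (Nd (c1 # mids @ [cm])) = nleaves c1 + snl mids + nleaves cm"
  by (simp add: nleaves_Nd snl_def)

lemma reduced_dec: "reduced (Nd cs) \<Longrightarrow> cs \<noteq> [] \<Longrightarrow>
  \<exists>c1 mids cm. cs = c1 # mids @ [cm] \<and> reduced c1 \<and> reduced cm \<and> (\<forall>c\<in>set mids. reduced c)"
proof -
  assume r: "reduced (Nd cs)" "cs \<noteq> []"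
  then obtain c1 rest where cs: "cs = c1 # rest" by (cases cs) auto
  with r have "rest \<noteq> []" by auto
  hence "rest = butlast rest @ [last rest]" by simp
  hence "cs = c1 # butlast rest @ [last rest]" using cs by simp
  moreover have "list_all reduced cs" using r by auto
  ultimately show ?thesis
    by (metis (no_types, lifting) Ball_set list.pred_inject(2) list_all_append)
qed

lemma phi_eq: "cs \<noteq> [] \<Longrightarrow> phi (Nd cs) = forest (butlast cs) 1"
proof -
  assume cs: "cs \<noteq> []"
  hence e: "cs = butlast cs @ [last cs]" by simp
  have "labl cs 1 = labl (butlast cs) 1 @ [lab (last cs) (1 + snl (butlast cs))]"
    by (subst e, subst labl_append) simp
  hence "butlast (labl cs 1) = labl (butlast cs) 1" by simp
  thus ?thesis unfolding phi_def lab_Nd[OF cs] forest_eq by simp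
qed

definition Fp :: "ptree \<Rightarrow> nat \<Rightarrow> bool" where
  "Fp c k \<longleftrightarrow> gd (cmp c k) \<and> LV (cmp c k) = {k..<k + nleaves c} \<and> k \<in> lv (sp c k) \<and>
     k + nleaves c - 1 \<in> lv (sp c k) \<and> (\<forall>T\<in>inn c k. lv T \<inter> lv (sp c k) = {})"

lemma forest_good: "\<forall>c\<in>set cs. \<forall>k. Fp c k \<Longrightarrow> gd (forest cs k) \<and> LV (forest cs k) = {k..<k + snl cs}"
proof (induction cs arbitrary: k)
  case Nil thus ?case by (simp add: gd_def)
next
  case (Cons c cs)
  hence ih: "gd (forest cs (k + nleaves c))" "LV (forest cs (k + nleaves c)) = {k + nleaves c..<k + nleaves c + snl cs}"
    by auto
  have f: "Fp c k" using Cons by auto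
  hence fc: "gd (cmp c k)" "LV (cmp c k) = {k..<k + nleaves c}" by (auto simp: Fp_def)
  have "gd (cmp c k \<union> forest cs (k + nleaves c))"
    by (rule gd_union[where m="k + nleaves c"]) (use fc ih in auto)
  moreover have "LV (cmp c k \<union> forest cs (k + nleaves c)) = {k..<k + snl (c # cs)}"
    using fc ih by auto
  ultimately show ?case by simp
qed

lemma forward_all: "reduced c \<Longrightarrow> \<forall>k. Fp c k"
proof (induction c)
  case (Nd cs)
  show ?case
  proof (intro allI)
  fix k
  show "Fp (Nd cs) k"
  proof (cases "cs = []")
    case True thus ?thesis by (simp add: Fp_def cmp_def gd_def)
  next
    case False
    then obtain c1 mids cm where cs: "cs = c1 # mids @ [cm]" and r: "reduced c1" "reduced cm" "\<forall>c\<in>set mids. reduced c"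
      using reduced_dec Nd.prems by blast
    define k1 where "k1 = k + nleaves c1"
    define k2 where "k2 = k1 + snl mids"
    define e where "e = k2 + nleaves cm"
    have F1: "Fp c1 k" using Nd.IH r cs by auto
    have F3: "Fp cm k2" using Nd.IH r cs by auto
    have F2: "gd (forest mids k1) \<and> LV (forest mids k1) = {k1..<k2}"
      using forest_good[of mids k1] Nd.IH r cs unfolding k2_def by auto
    have p1: "1 \<le> nleaves c1" "1 \<le> nleaves cm" using nleaves_pos by auto
    have M: "gd (insert (BNode (sp c1 k) (sp cm k2)) (inn c1 k \<union> forest mids k1 \<union> inn cm k2)) \<and>
      (\<forall>T\<in>inn c1 k \<union> forest mids k1 \<union> inn cm k2. lv T \<inter> lv (BNode (sp c1 k) (sp cm k2)) = {})"
      apply (rule gd_merge[where k=k and ka=k1 and kb=k2 and e=e])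
      using F1 F2 F3 p1 unfolding Fp_def cmp_def k1_def k2_def e_def by auto
    have sp: "sp (Nd cs) k = BNode (sp c1 k) (sp cm k2)" unfolding cs sp_Nd3 k2_def k1_def ..
    have inn: "inn (Nd cs) k = inn c1 k \<union> forest mids k1 \<union> inn cm k2" unfolding cs inn_Nd3 k2_def k1_def ..
    have nl: "k + nleaves (Nd cs) = e" unfolding cs nleaves_Nd3 e_def k2_def k1_def by simp
    have "LV (cmp (Nd cs) k) = (lv (sp c1 k) \<union> LV (inn c1 k)) \<union> LV (forest mids k1) \<union> (lv (sp cm k2) \<union> LV (inn cm k2))"
      unfolding cmp_def sp inn by auto
    also have "\<dots> = {k..<k1} \<union> {k1..<k2} \<union> {k2..<e}"
      using F1 F2 F3 unfolding Fp_def cmp_def k1_def[symmetric] e_def by simp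
    also have "\<dots> = {k..<e}" unfolding e_def k2_def k1_def by auto
    finally have "LV (cmp (Nd cs) k) = {k..<e}" .
    moreover have "k \<in> lv (sp (Nd cs) k)" "e - 1 \<in> lv (sp (Nd cs) k)"
      using F1 F3 unfolding sp Fp_def e_def by auto
    ultimately show ?thesis using M unfolding Fp_def nl sp inn cmp_def by simp
  qed
  qed
qed

lemma forward: "reduced c \<Longrightarrow> Fp c k"
  using forward_all by blast

lemma uniq: "gd A \<Longrightarrow> T1 \<in> A \<Longrightarrow> T2 \<in> A \<Longrightarrow> k \<in> lv T1 \<Longrightarrow> k \<in> lv T2 \<Longrightarrow> T1 = T2"
  unfolding gd_def by blast

lemma filt: "LV A \<subseteq> I \<Longrightarrow> LV B \<subseteq> J \<Longrightarrow> I \<inter> J = {} \<Longrightarrow>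
  {T \<in> A \<union> B. lv T \<subseteq> I} = A \<and> {T \<in> A \<union> B. lv T \<subseteq> J} = B"
proof -
  assume a: "LV A \<subseteq> I" "LV B \<subseteq> J" "I \<inter> J = {}"
  have sA: "\<And>T. T \<in> A \<Longrightarrow> lv T \<subseteq> I" using a(1) unfolding LV_def by auto
  have sB: "\<And>T. T \<in> B \<Longrightarrow> lv T \<subseteq> J" using a(2) unfolding LV_def by auto
  have nB: "\<And>T. T \<in> B \<Longrightarrow> \<not> lv T \<subseteq> I"
  proof
    fix T assume "T \<in> B" "lv T \<subseteq> I"
    hence "lv T \<subseteq> I \<inter> J" using sB by auto
    thus False using a(3) lv_ne[of T] by auto
  qed
  have nA: "\<And>T. T \<in> A \<Longrightarrow> \<not> lv T \<subseteq> J"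
  proof
    fix T assume "T \<in> A" "lv T \<subseteq> J"
    hence "lv T \<subseteq> I \<inter> J" using sA by auto
    thus False using a(3) lv_ne[of T] by auto
  qed
  show ?thesis using sA sB nA nB by auto
qed

lemma sp_in_cmp: "sp c k \<in> cmp c k" by (simp add: cmp_def)

lemma lv_LV: "T \<in> A \<Longrightarrow> lv T \<subseteq> LV A" by (auto simp: LV_def)

lemma cmp_sub: "reduced c \<Longrightarrow> T \<in> cmp c k \<Longrightarrow> lv T \<subseteq> {k..<k + nleaves c}"
proof -
  assume "reduced c" "T \<in> cmp c k"
  moreover hence "LV (cmp c k) = {k..<k + nleaves c}" using forward[of c k] unfolding Fp_def by simp
  ultimately show ?thesis using lv_LV by metis
qed

lemma forest_sub: "\<forall>c\<in>set cs. reduced c \<Longrightarrow> LV (forest cs k) = {k..<k + snl cs}"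
proof -
  assume "\<forall>c\<in>set cs. reduced c"
  hence "\<forall>c\<in>set cs. \<forall>k. Fp c k" using forward by auto
  thus ?thesis using forest_good by simp
qed

lemma inj_list: "\<forall>c\<in>set cs. reduced c \<and> (\<forall>c' k. reduced c' \<longrightarrow> cmp c k = cmp c' k \<longrightarrow> c = c') \<Longrightarrow>
  \<forall>c\<in>set cs'. reduced c \<Longrightarrow> forest cs k = forest cs' k \<Longrightarrow> cs = cs'"
proof (induction cs arbitrary: cs' k)
  case Nil
  show ?case
  proof (cases cs')
    case (Cons c' r') thus ?thesis using Nil sp_in_cmp[of c' k] by auto
  qed simp
next
  case (Cons c r)
  show ?case
  proof (cases cs')
    case Nil thus ?thesis using Cons.prems(3) sp_in_cmp[of c k] by auto
  next
    case (Cons c' r')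
    have rc: "reduced c" "reduced c'" "\<forall>x\<in>set r. reduced x" "\<forall>x\<in>set r'. reduced x"
      using Cons.prems(1,2) Cons by auto
    define F where "F = forest (c # r) k"
    have F': "F = forest (c' # r') k" using Cons.prems(3) Cons F_def by simp
    have "\<forall>x\<in>set (c # r). \<forall>k. Fp x k" using rc forward by auto
    hence gF: "gd F" unfolding F_def using forest_good[of "c # r" k] by simp
    have f1: "Fp c k" "Fp c' k" using rc forward by auto
    have "sp c k \<in> F" using F_def sp_in_cmp by simp
    moreover have "sp c' k \<in> F" using F' sp_in_cmp by simp
    moreover have "k \<in> lv (sp c k)" "k \<in> lv (sp c' k)" using f1 unfolding Fp_def by auto
    ultimately have spe: "sp c k = sp c' k" using uniq[OF gF] by blast
    have n1: "k + nleaves c - 1 \<in> lv (sp c k)" "k + nleaves c' - 1 \<in> lv (sp c' k)" using f1 unfolding Fp_def by auto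
    have "lv (sp c k) \<subseteq> {k..<k + nleaves c}" "lv (sp c' k) \<subseteq> {k..<k + nleaves c'}"
      using cmp_sub rc sp_in_cmp by auto
    hence "k + nleaves c' - 1 < k + nleaves c" "k + nleaves c - 1 < k + nleaves c'" using n1 spe by auto
    hence ne: "nleaves c = nleaves c'" using nleaves_pos[of c] nleaves_pos[of c'] by linarith
    have L1: "LV (cmp c k) \<subseteq> {..<k + nleaves c}" "LV (cmp c' k) \<subseteq> {..<k + nleaves c}"
      using f1 ne unfolding Fp_def by auto
    have L2: "LV (forest r (k + nleaves c)) \<subseteq> {k + nleaves c..}" "LV (forest r' (k + nleaves c)) \<subseteq> {k + nleaves c..}"
      using forest_sub rc by auto
    have e1: "F = cmp c k \<union> forest r (k + nleaves c)" "F = cmp c' k \<union> forest r' (k + nleaves c)"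
      using F_def F' ne by auto
    have dj: "{..<k + nleaves c} \<inter> {k + nleaves c..} = {}" by auto
    have "cmp c k = cmp c' k" "forest r (k + nleaves c) = forest r' (k + nleaves c)"
      using filt[OF L1(1) L2(1) dj] filt[OF L1(2) L2(2) dj] e1 by metis+
    moreover have "\<forall>c' k. reduced c' \<longrightarrow> cmp c k = cmp c' k \<longrightarrow> c = c'" using Cons.prems by simp
    ultimately have "c = c'" using rc by blast
    have "\<forall>c\<in>set r. reduced c \<and> (\<forall>c' k. reduced c' \<longrightarrow> cmp c k = cmp c' k \<longrightarrow> c = c')"
      using Cons.prems(1) by simp
    hence "r = r'" using Cons.IH[of r' "k + nleaves c"] rc \<open>forest r _ = _\<close> by blast
    show ?thesis using Cons \<open>c = c'\<close> \<open>r = r'\<close> by simp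
  qed
qed

lemma inj_tree_all: "reduced c \<Longrightarrow> \<forall>c' k. reduced c' \<longrightarrow> cmp c k = cmp c' k \<longrightarrow> c = c'"
proof (induction c)
  case (Nd cs)
  show ?case
  proof (intro allI impI)
    fix c' k assume rc': "reduced c'" and ce: "cmp (Nd cs) k = cmp c' k"
    obtain cs' where c': "c' = Nd cs'" by (cases c')
    show "Nd cs = c'"
    proof (cases "cs = []")
      case True
      show ?thesis
      proof (cases "cs' = []")
        case False
        then obtain c1 mids cm where "cs' = c1 # mids @ [cm]" using reduced_dec rc' c' by blast
        hence "sp c' k \<in> {BLeaf k}" using ce True sp_in_cmp[of c' k] c' by (auto simp: cmp_def sp_Nd3)
        thus ?thesis using \<open>cs' = c1 # mids @ [cm]\<close> c' by (simp add: sp_Nd3)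
      qed (use True c' in simp)
    next
      case False
      then obtain c1 mids cm where cs: "cs = c1 # mids @ [cm]" and r: "reduced c1" "reduced cm" "\<forall>c\<in>set mids. reduced c"
        using reduced_dec Nd.prems by blast
      show ?thesis
      proof (cases "cs' = []")
        case True
        hence "sp (Nd cs) k \<in> {BLeaf k}" using ce sp_in_cmp[of "Nd cs" k] c' by (auto simp: cmp_def)
        thus ?thesis using cs by (simp add: sp_Nd3)
      next
        case False
        then obtain c1' mids' cm' where cs': "cs' = c1' # mids' @ [cm']" and r': "reduced c1'" "reduced cm'" "\<forall>c\<in>set mids'. reduced c"
          using reduced_dec rc' c' by blast
        define k1 where "k1 = k + nleaves c1"
        define k2 where "k2 = k1 + snl mids"
        define e where "e = k2 + nleaves cm"
        define k1' where "k1' = k + nleaves c1'"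
        define k2' where "k2' = k1' + snl mids'"
        define e' where "e' = k2' + nleaves cm'"
        have sp: "sp (Nd cs) k = BNode (sp c1 k) (sp cm k2)" unfolding cs sp_Nd3 k2_def k1_def ..
        have inn: "inn (Nd cs) k = inn c1 k \<union> forest mids k1 \<union> inn cm k2" unfolding cs inn_Nd3 k2_def k1_def ..
        have nl: "k + nleaves (Nd cs) = e" unfolding cs nleaves_Nd3 e_def k2_def k1_def by simp
        have sp': "sp c' k = BNode (sp c1' k) (sp cm' k2')" unfolding c' cs' sp_Nd3 k2'_def k1'_def ..
        have inn': "inn c' k = inn c1' k \<union> forest mids' k1' \<union> inn cm' k2'" unfolding c' cs' inn_Nd3 k2'_def k1'_def ..
        have nl': "k + nleaves c' = e'" unfolding c' cs' nleaves_Nd3 e'_def k2'_def k1'_def by simp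
        have F: "Fp (Nd cs) k" "Fp c' k" using forward Nd.prems rc' by auto
        have spe: "sp (Nd cs) k = sp c' k"
          using uniq[of "cmp (Nd cs) k"] F ce sp_in_cmp unfolding Fp_def by metis
        hence L: "sp c1 k = sp c1' k" and R: "sp cm k2 = sp cm' k2'" using sp sp' by auto
        have f1: "Fp c1 k" "Fp c1' k" "Fp cm k2" "Fp cm' k2'" using forward r r' by auto
        have "k + nleaves c1 - 1 \<in> lv (sp c1 k)" "k + nleaves c1' - 1 \<in> lv (sp c1' k)"
          "lv (sp c1 k) \<subseteq> {k..<k + nleaves c1}" "lv (sp c1' k) \<subseteq> {k..<k + nleaves c1'}"
          using f1 unfolding Fp_def cmp_def by auto
        hence "nleaves c1 = nleaves c1'" using L nleaves_pos[of c1] nleaves_pos[of c1'] by fastforce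
        hence k1e: "k1 = k1'" unfolding k1_def k1'_def by simp
        have ee: "e = e'"
        proof -
          have "LV (cmp (Nd cs) k) = {k..<e}" "LV (cmp c' k) = {k..<e'}"
            using F nl nl' unfolding Fp_def by auto
          hence "{k..<e} = {k..<e'}" using ce by simp
          moreover have "k < e" "k < e'" using nl nl' nleaves_pos[of "Nd cs"] nleaves_pos[of c'] by auto
          ultimately show ?thesis by (metis atLeastLessThan_inj(2) not_less_iff_gr_or_eq)
        qed
        have "k2 \<in> lv (sp cm k2)" "k2' \<in> lv (sp cm' k2')"
          "lv (sp cm k2) \<subseteq> {k2..<e}" "lv (sp cm' k2') \<subseteq> {k2'..<e'}"
          using f1 unfolding Fp_def cmp_def e_def e'_def by auto
        hence k2e: "k2 = k2'" using R ee by fastforce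
        have ie: "inn (Nd cs) k = inn c' k"
        proof -
          have "sp (Nd cs) k \<notin> inn (Nd cs) k" "sp c' k \<notin> inn c' k" using F unfolding Fp_def by auto
          thus ?thesis using ce spe insert_ident unfolding cmp_def by metis
        qed
        have G: "\<forall>c\<in>set mids. reduced c" "\<forall>c\<in>set mids'. reduced c" using r r' by auto
        have l1: "LV (inn c1 k) \<subseteq> {k..<k1}" "LV (inn c1' k) \<subseteq> {k..<k1}"
          using f1 k1e unfolding Fp_def cmp_def k1_def k1'_def by auto
        have l2: "LV (forest mids k1) \<subseteq> {k1..<k2}" "LV (forest mids' k1) \<subseteq> {k1..<k2}"
          using forest_sub[OF G(1)] forest_sub[OF G(2)] k1e k2e unfolding k2_def k2'_def by auto
        have l3: "LV (inn cm k2) \<subseteq> {k2..<e}" "LV (inn cm' k2) \<subseteq> {k2..<e}"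
          using f1 k2e ee unfolding Fp_def cmp_def e_def e'_def by auto
        have kk: "k1 \<le> k2" unfolding k2_def by simp
        have I1: "inn c1 k = inn c1' k"
        proof -
          have a: "LV (forest mids k1 \<union> inn cm k2) \<subseteq> {k1..}" "LV (forest mids' k1 \<union> inn cm' k2) \<subseteq> {k1..}"
            using l2 l3 kk by auto
          have "inn (Nd cs) k = inn c1 k \<union> (forest mids k1 \<union> inn cm k2)"
            "inn c' k = inn c1' k \<union> (forest mids' k1 \<union> inn cm' k2)" using inn inn' k1e k2e by auto
          moreover have dj: "{k..<k1} \<inter> {k1..} = {}" by auto
          ultimately show ?thesis using filt[OF l1(1) a(1) dj] filt[OF l1(2) a(2) dj] ie by metis
        qed
        have I3: "inn cm k2 = inn cm' k2"
        proof -
          have a: "LV (inn c1 k \<union> forest mids k1) \<subseteq> {..<k2}" "LV (inn c1' k \<union> forest mids' k1) \<subseteq> {..<k2}"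
            using l1 l2 kk by auto
          have b: "LV (inn cm k2) \<subseteq> {k2..}" "LV (inn cm' k2) \<subseteq> {k2..}" using l3 by auto
          have "inn (Nd cs) k = (inn c1 k \<union> forest mids k1) \<union> inn cm k2"
            "inn c' k = (inn c1' k \<union> forest mids' k1) \<union> inn cm' k2" using inn inn' k1e k2e by auto
          moreover have dj: "{..<k2} \<inter> {k2..} = {}" by auto
          ultimately show ?thesis using filt[OF a(1) b(1) dj] filt[OF a(2) b(2) dj] ie by metis
        qed
        have I2: "forest mids k1 = forest mids' k1"
        proof -
          have a: "LV (inn c1 k \<union> inn cm k2) \<subseteq> {..<k1} \<union> {k2..}" "LV (inn c1' k \<union> inn cm' k2) \<subseteq> {..<k1} \<union> {k2..}"
            using l1 l3 by auto
          have "inn (Nd cs) k = forest mids k1 \<union> (inn c1 k \<union> inn cm k2)"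
            "inn c' k = forest mids' k1 \<union> (inn c1' k \<union> inn cm' k2)" using inn inn' k1e k2e by auto
          moreover have dj: "{k1..<k2} \<inter> ({..<k1} \<union> {k2..}) = {}" by auto
          ultimately show ?thesis using filt[OF l2(1) a(1) dj] filt[OF l2(2) a(2) dj] ie by metis
        qed
        have "c1 = c1'"
        proof -
          have "\<forall>c' k. reduced c' \<longrightarrow> cmp c1 k = cmp c' k \<longrightarrow> c1 = c'" using Nd.IH[of c1] cs r by simp
          moreover have "cmp c1 k = cmp c1' k" using I1 L unfolding cmp_def by simp
          ultimately show ?thesis using r' by metis
        qed
        moreover have "cm = cm'"
        proof -
          have "\<forall>c' k. reduced c' \<longrightarrow> cmp cm k = cmp c' k \<longrightarrow> cm = c'" using Nd.IH[of cm] cs r by simp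
          moreover have "cmp cm k2 = cmp cm' k2" using I3 R k2e unfolding cmp_def by simp
          ultimately show ?thesis using r' by metis
        qed
        moreover have "mids = mids'"
        proof (rule inj_list[OF _ G(2) I2])
          show "\<forall>c\<in>set mids. reduced c \<and> (\<forall>c' k. reduced c' \<longrightarrow> cmp c k = cmp c' k \<longrightarrow> c = c')"
          proof
            fix x assume x: "x \<in> set mids"
            hence "x \<in> set cs" "reduced x" using cs r by auto
            thus "reduced x \<and> (\<forall>c' k. reduced c' \<longrightarrow> cmp x k = cmp c' k \<longrightarrow> x = c')" using Nd.IH by simp
          qed
        qed
        ultimately show ?thesis using cs cs' c' by simp
      qed
    qed
  qed
qed

lemma LV_eqI: "(\<And>T. T \<in> A \<Longrightarrow> lv T \<subseteq> S) \<Longrightarrow> (\<And>u. u \<in> S \<Longrightarrow> \<exists>T\<in>A. u \<in> lv T) \<Longrightarrow> LV A = S"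
  unfolding LV_def by blast

lemma LV_memE: "u \<in> LV A \<Longrightarrow> \<exists>T\<in>A. u \<in> lv T"
  unfolding LV_def by blast

lemma gd_sorted: "gd A \<Longrightarrow> T \<in> A \<Longrightarrow> sorted_wrt (<) (bleaves T)"
  unfolding gd_def by blast

lemma gd_dis: "gd A \<Longrightarrow> T1 \<in> A \<Longrightarrow> T2 \<in> A \<Longrightarrow> T1 \<noteq> T2 \<Longrightarrow> lv T1 \<inter> lv T2 = {}"
  unfolding gd_def by blast

lemma finite_lv[simp]: "finite (lv T)" by (simp add: lv_def)

lemma bleaves_single: "sorted_wrt (<) (bleaves T) \<Longrightarrow> lv T = {a} \<Longrightarrow> T = BLeaf a"
proof -
  assume s: "sorted_wrt (<) (bleaves T)" and l: "lv T = {a}"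
  have "distinct (bleaves T)" using s by (simp add: sorted_wrt_iff_nth_less distinct_conv_nth)
    (metis less_irrefl nat_neq_iff)
  hence "length (bleaves T) = 1" using l distinct_card[of "bleaves T"] by (simp add: lv_def)
  show ?thesis
  proof (cases T)
    case (BLeaf b) thus ?thesis using l by (simp add: lv_def)
  next
    case (BNode l r)
    have "bleaves l \<noteq> []" "bleaves r \<noteq> []" by (rule bleaves_ne)+
    hence "length (bleaves T) \<ge> 2" using BNode by (cases "bleaves l"; cases "bleaves r") auto
    thus ?thesis using \<open>length (bleaves T) = 1\<close> by simp
  qed
qed

definition PP :: "nat \<Rightarrow> bool" where
  "PP N \<longleftrightarrow> (\<forall>k A T0. gd A \<longrightarrow> LV A = {k..<k+N} \<longrightarrow> T0 \<in> A \<longrightarrow> k \<in> lv T0 \<longrightarrow> k+N-1 \<in> lv T0 \<longrightarrow> 1 \<le> N \<longrightarrow>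
     (\<exists>c. reduced c \<and> nleaves c = N \<and> sp c k = T0 \<and> inn c k = A - {T0}))"

definition SS :: "nat \<Rightarrow> bool" where
  "SS N \<longleftrightarrow> (\<forall>k A. gd A \<longrightarrow> LV A = {k..<k+N} \<longrightarrow>
     (\<exists>cs. (\<forall>c\<in>set cs. reduced c) \<and> snl cs = N \<and> forest cs k = A))"

lemma PP_D: "PP N \<Longrightarrow> gd A \<Longrightarrow> LV A = {k..<k+N} \<Longrightarrow> T0 \<in> A \<Longrightarrow> k \<in> lv T0 \<Longrightarrow> k+N-1 \<in> lv T0 \<Longrightarrow> 1 \<le> N \<Longrightarrow>
     (\<exists>c. reduced c \<and> nleaves c = N \<and> sp c k = T0 \<and> inn c k = A - {T0})"
  unfolding PP_def by blast

lemma SS_D: "SS N \<Longrightarrow> gd A \<Longrightarrow> LV A = {k..<k+N} \<Longrightarrow>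
     (\<exists>cs. (\<forall>c\<in>set cs. reduced c) \<and> snl cs = N \<and> forest cs k = A)"
  unfolding SS_def by blast

lemma S_step:
  assumes IHS: "\<And>m. m < N \<Longrightarrow> SS m" and IHP: "\<And>m. m \<le> N \<Longrightarrow> PP m"
  shows "SS N"
  unfolding SS_def
proof (intro allI impI)
  fix k A assume g: "gd A" and L: "LV A = {k..<k+N}"
  show "\<exists>cs. (\<forall>c\<in>set cs. reduced c) \<and> snl cs = N \<and> forest cs k = A"
  proof (cases "N = 0")
    case True
    hence "A = {}" using L lv_ne unfolding LV_def by auto
    thus ?thesis using True by (intro exI[of _ "[]"]) simp
  next
    case False
    hence "k \<in> LV A" using L by auto
    then obtain T0 where T0: "T0 \<in> A" "k \<in> lv T0" using LV_memE by blast
    define M where "M = Max (lv T0)"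
    have sub: "\<And>T. T \<in> A \<Longrightarrow> lv T \<subseteq> {k..<k+N}" using L lv_LV by metis
    have M: "M \<in> lv T0" "\<And>u. u \<in> lv T0 \<Longrightarrow> u \<le> M" unfolding M_def using lv_ne by auto
    have kM: "k \<le> M" "M < k + N" using M sub[OF T0(1)] T0 by auto
    have cls: "\<And>T. T \<in> A \<Longrightarrow> T \<noteq> T0 \<Longrightarrow> lv T \<subseteq> {k<..<M} \<or> lv T \<subseteq> {M<..}"
    proof -
      fix T assume T: "T \<in> A" "T \<noteq> T0"
      have d: "lv T \<inter> lv T0 = {}" using gd_dis[OF g T(1) T0(1) T(2)] T0 by auto
      show "lv T \<subseteq> {k<..<M} \<or> lv T \<subseteq> {M<..}"
      proof (cases "\<exists>v\<in>lv T. v < M")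
        case True
        then obtain v where v: "v \<in> lv T" "v < M" by blast
        have "k \<le> v" using sub[OF T(1)] v by auto
        moreover have "k \<noteq> v" using v d T0 by auto
        ultimately have "k < v" by simp
        thus ?thesis using nest[OF g T0(1) T(1) T(2) T0(2) M(1) v(1)] v by auto
      next
        case False
        have "\<And>v. v \<in> lv T \<Longrightarrow> M < v"
        proof -
          fix v assume "v \<in> lv T"
          moreover hence "v \<noteq> M" using d M(1) by auto
          ultimately show "M < v" using False by auto
        qed
        thus ?thesis by auto
      qed
    qed
    define A1 where "A1 = insert T0 {T \<in> A - {T0}. lv T \<subseteq> {k<..<M}}"
    define A2 where "A2 = {T \<in> A - {T0}. lv T \<subseteq> {M<..}}"
    have AU: "A = A1 \<union> A2"
    proof
      show "A \<subseteq> A1 \<union> A2"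
      proof
        fix T assume "T \<in> A"
        thus "T \<in> A1 \<union> A2" using cls[of T] unfolding A1_def A2_def by (cases "T = T0") auto
      qed
      show "A1 \<union> A2 \<subseteq> A" using T0 unfolding A1_def A2_def by auto
    qed
    have g1: "gd A1" by (rule gd_mono[OF g]) (auto simp: A1_def T0)
    have g2: "gd A2" by (rule gd_mono[OF g]) (auto simp: A2_def)
    have L1: "LV A1 = {k..<k + (M + 1 - k)}"
    proof (rule LV_eqI)
      fix T assume "T \<in> A1"
      thus "lv T \<subseteq> {k..<k + (M + 1 - k)}" using M(2) sub T0 kM unfolding A1_def by fastforce
    next
      fix u assume u: "u \<in> {k..<k + (M + 1 - k)}"
      hence "u \<in> LV A" using L kM by auto
      then obtain T where T: "T \<in> A" "u \<in> lv T" using LV_memE by blast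
      have "T \<notin> A2" using T u unfolding A2_def by auto
      thus "\<exists>T\<in>A1. u \<in> lv T" using T AU by blast
    qed
    have L2: "LV A2 = {M+1..<M+1 + (k + N - (M + 1))}"
    proof (rule LV_eqI)
      fix T assume "T \<in> A2"
      thus "lv T \<subseteq> {M+1..<M+1 + (k + N - (M + 1))}" using sub kM unfolding A2_def by fastforce
    next
      fix u assume u: "u \<in> {M+1..<M+1 + (k + N - (M + 1))}"
      hence "u \<in> LV A" using L kM by auto
      then obtain T where T: "T \<in> A" "u \<in> lv T" using LV_memE by blast
      have "T \<noteq> T0" using M(2) T u by fastforce
      have "T \<notin> A1" using T u M(2) \<open>T \<noteq> T0\<close> unfolding A1_def by auto
      thus "\<exists>T\<in>A2. u \<in> lv T" using T AU by blast
    qed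
    have "PP (M + 1 - k)" using IHP kM by auto
    then obtain c where c: "reduced c" "nleaves c = M + 1 - k" "sp c k = T0" "inn c k = A1 - {T0}"
    proof -
      have "T0 \<in> A1" unfolding A1_def by simp
      moreover have "k + (M + 1 - k) - 1 \<in> lv T0" using M(1) kM by simp
      moreover have "1 \<le> M + 1 - k" using kM by simp
      ultimately show ?thesis using that PP_D[OF \<open>PP (M + 1 - k)\<close> g1 L1 _ T0(2)] by blast
    qed
    have "SS (k + N - (M + 1))" using IHS kM by auto
    then obtain cs where cs: "\<forall>c\<in>set cs. reduced c" "snl cs = k + N - (M + 1)" "forest cs (M+1) = A2"
      using SS_D[OF _ g2 L2] by blast
    have "cmp c k = A1" using c T0 unfolding cmp_def A1_def by auto
    moreover have "k + nleaves c = M + 1" using c kM by simp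
    ultimately have "forest (c # cs) k = A" using AU cs by simp
    moreover have "snl (c # cs) = N" using c cs kM by simp
    ultimately show ?thesis using c cs by (intro exI[of _ "c # cs"]) simp
  qed
qed

lemma P_step:
  assumes IH: "\<And>m. m < N \<Longrightarrow> PP m \<and> SS m"
  shows "PP N"
  unfolding PP_def
proof (intro allI impI)
  fix k A T0 assume g: "gd A" and L: "LV A = {k..<k+N}" and T0: "T0 \<in> A" and kT: "k \<in> lv T0"
    and eT: "k+N-1 \<in> lv T0" and N1: "1 \<le> N"
  have sub: "\<And>T. T \<in> A \<Longrightarrow> lv T \<subseteq> {k..<k+N}" using L lv_LV by metis
  have dis: "\<And>T. T \<in> A \<Longrightarrow> T \<noteq> T0 \<Longrightarrow> lv T \<inter> lv T0 = {}" using gd_dis[OF g _ T0] by metis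
  show "\<exists>c. reduced c \<and> nleaves c = N \<and> sp c k = T0 \<and> inn c k = A - {T0}"
  proof (cases "N = 1")
    case True
    have "lv T0 = {k}" using sub[OF T0] kT True by auto
    hence T0e: "T0 = BLeaf k" using bleaves_single gd_sorted[OF g T0] by blast
    have "A = {T0}"
    proof
      show "A \<subseteq> {T0}"
      proof
        fix T assume T: "T \<in> A"
        have "lv T \<subseteq> {k}" using sub[OF T] True by auto
        hence "k \<in> lv T" using lv_ne[of T] by blast
        hence "T = T0" using dis[OF T] kT by blast
        thus "T \<in> {T0}" by simp
      qed
    qed (use T0 in simp)
    thus ?thesis using True T0e by (intro exI[of _ "Nd []"]) simp
  next
    case False
    hence N2: "2 \<le> N" using N1 by simp
    obtain L R where T0e: "T0 = BNode L R"
    proof (cases T0)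
      case (BLeaf a)
      hence "lv T0 = {a}" by simp
      thus ?thesis using kT eT N2 by auto
    qed
    have sT: "sorted_wrt (<) (bleaves L)" "sorted_wrt (<) (bleaves R)" "\<And>a b. a \<in> lv L \<Longrightarrow> b \<in> lv R \<Longrightarrow> a < b"
      using gd_sorted[OF g T0] unfolding T0e sorted_BNode by auto
    have subT0: "lv L \<subseteq> {k..<k+N}" "lv R \<subseteq> {k..<k+N}" using sub[OF T0] T0e by auto
    have kL: "k \<in> lv L"
    proof (rule ccontr)
      assume "k \<notin> lv L"
      hence kR: "k \<in> lv R" using kT T0e by simp
      obtain a where "a \<in> lv L" using lv_ne[of L] by blast
      hence "a < k" "k \<le> a" using sT(3)[OF _ kR] subT0 by auto
      thus False by simp
    qed
    have eR: "k+N-1 \<in> lv R"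
    proof (rule ccontr)
      assume "k+N-1 \<notin> lv R"
      hence eL: "k+N-1 \<in> lv L" using eT T0e by simp
      obtain a where "a \<in> lv R" using lv_ne[of R] by blast
      hence "k+N-1 < a" "a < k+N" using sT(3)[OF eL] subT0 by auto
      thus False by simp
    qed
    define x where "x = Max (lv L)"
    define y where "y = Min (lv R)"
    have xL: "x \<in> lv L" "\<And>u. u \<in> lv L \<Longrightarrow> u \<le> x" unfolding x_def using lv_ne by auto
    have yR: "y \<in> lv R" "\<And>u. u \<in> lv R \<Longrightarrow> y \<le> u" unfolding y_def using lv_ne by auto
    have xy: "x < y" using sT(3) xL yR by blast
    have kx: "k \<le> x" using xL kL by blast
    have ye: "y \<le> k + N - 1" using yR eR by blast
    have T0L: "\<And>u. u \<in> lv T0 \<longleftrightarrow> u \<in> lv L \<or> u \<in> lv R" using T0e by simp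
    have cls: "\<And>T. T \<in> A \<Longrightarrow> T \<noteq> T0 \<Longrightarrow> lv T \<subseteq> {k<..<x} \<or> lv T \<subseteq> {x<..<y} \<or> lv T \<subseteq> {y<..<k+N-1}"
    proof -
      fix T assume T: "T \<in> A" "T \<noteq> T0"
      obtain b where b: "b \<in> lv T" using lv_ne[of T] by blast
      have bn: "b \<noteq> k" "b \<noteq> x" "b \<noteq> y" "b \<noteq> k+N-1"
        using dis[OF T] b kT eT T0L xL(1) yR(1) by blast+
      have bk: "k \<le> b" "b < k + N" using sub[OF T(1)] b by auto
      have xT: "x \<in> lv T0" and yT: "y \<in> lv T0" using T0L xL yR by auto
      show "lv T \<subseteq> {k<..<x} \<or> lv T \<subseteq> {x<..<y} \<or> lv T \<subseteq> {y<..<k+N-1}"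
      proof (cases "b < x")
        case True
        hence "lv T \<subseteq> {k<..<x}" using nest[OF g T0 T(1) T(2) kT xT b] bn bk by simp
        thus ?thesis by simp
      next
        case F1: False
        show ?thesis
        proof (cases "b < y")
          case True
          hence "lv T \<subseteq> {x<..<y}" using nest[OF g T0 T(1) T(2) xT yT b] bn F1 by simp
          thus ?thesis by simp
        next
          case False
          hence "lv T \<subseteq> {y<..<k+N-1}" using nest[OF g T0 T(1) T(2) yT eT b] bn bk by simp
          thus ?thesis by simp
        qed
      qed
    qed
    define A1 where "A1 = {T \<in> A - {T0}. lv T \<subseteq> {k<..<x}}"
    define A2 where "A2 = {T \<in> A - {T0}. lv T \<subseteq> {x<..<y}}"
    define A3 where "A3 = {T \<in> A - {T0}. lv T \<subseteq> {y<..<k+N-1}}"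
    have AU: "A - {T0} = A1 \<union> A2 \<union> A3"
    proof
      show "A - {T0} \<subseteq> A1 \<union> A2 \<union> A3"
      proof
        fix T assume "T \<in> A - {T0}"
        thus "T \<in> A1 \<union> A2 \<union> A3" using cls[of T] unfolding A1_def A2_def A3_def by auto
      qed
    qed (auto simp: A1_def A2_def A3_def)
    have LA1: "L \<notin> A1"
    proof
      assume "L \<in> A1"
      hence "lv L \<inter> lv T0 = {}" using dis unfolding A1_def by auto
      thus False using kL T0L by blast
    qed
    have RA3: "R \<notin> A3"
    proof
      assume "R \<in> A3"
      hence "lv R \<inter> lv T0 = {}" using dis unfolding A3_def by auto
      thus False using eR T0L by blast
    qed
    have g1: "gd (insert L A1)" by (rule gd_replace[OF g T0 _ sT(1)]) (auto simp: T0e A1_def)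
    have g2: "gd A2" by (rule gd_mono[OF g]) (auto simp: A2_def)
    have g3: "gd (insert R A3)" by (rule gd_replace[OF g T0 _ sT(2)]) (auto simp: T0e A3_def)
    have L1: "LV (insert L A1) = {k..<k + (x + 1 - k)}"
    proof (rule LV_eqI)
      fix T assume "T \<in> insert L A1"
      thus "lv T \<subseteq> {k..<k + (x + 1 - k)}" using xL(2) subT0 kx unfolding A1_def by fastforce
    next
      fix u assume u: "u \<in> {k..<k + (x + 1 - k)}"
      hence "u \<in> LV A" using L xy ye by auto
      then obtain T where T: "T \<in> A" "u \<in> lv T" using LV_memE by blast
      show "\<exists>T\<in>insert L A1. u \<in> lv T"
      proof (cases "T = T0")
        case True
        hence "u \<in> lv L" using T T0L yR(2) u xy by fastforce
        thus ?thesis by blast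
      next
        case False
        hence "T \<in> A1 \<union> A2 \<union> A3" using AU T by blast
        moreover have "T \<notin> A2" "T \<notin> A3" using T u xy kx unfolding A2_def A3_def by (fastforce simp: subset_iff)+
        ultimately show ?thesis using T by blast
      qed
    qed
    have L2: "LV A2 = {x+1..<x+1 + (y - x - 1)}"
    proof (rule LV_eqI)
      fix T assume "T \<in> A2"
      thus "lv T \<subseteq> {x+1..<x+1 + (y - x - 1)}" unfolding A2_def by fastforce
    next
      fix u assume u: "u \<in> {x+1..<x+1 + (y - x - 1)}"
      hence "u \<in> LV A" using L kx ye by auto
      then obtain T where T: "T \<in> A" "u \<in> lv T" using LV_memE by blast
      have "T \<noteq> T0"
      proof
        assume "T = T0"
        hence "u \<in> lv L \<or> u \<in> lv R" using T T0L by blast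
        thus False using xL(2) yR(2) u by fastforce
      qed
      hence "T \<in> A1 \<union> A2 \<union> A3" using AU T by blast
      moreover have "T \<notin> A1" "T \<notin> A3" using T u xy kx unfolding A1_def A3_def by (fastforce simp: subset_iff)+
      ultimately show "\<exists>T\<in>A2. u \<in> lv T" using T by blast
    qed
    have L3: "LV (insert R A3) = {y..<y + (k + N - y)}"
    proof (rule LV_eqI)
      fix T assume "T \<in> insert R A3"
      thus "lv T \<subseteq> {y..<y + (k + N - y)}" using yR(2) subT0 ye unfolding A3_def by fastforce
    next
      fix u assume u: "u \<in> {y..<y + (k + N - y)}"
      hence "u \<in> LV A" using L kx xy by auto
      then obtain T where T: "T \<in> A" "u \<in> lv T" using LV_memE by blast
      show "\<exists>T\<in>insert R A3. u \<in> lv T"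
      proof (cases "T = T0")
        case True
        hence "u \<in> lv R" using T T0L xL(2) u xy by fastforce
        thus ?thesis by blast
      next
        case False
        hence "T \<in> A1 \<union> A2 \<union> A3" using AU T by blast
        moreover have "T \<notin> A1" "T \<notin> A2" using T u xy kx unfolding A1_def A2_def by (fastforce simp: subset_iff)+
        ultimately show ?thesis using T by blast
      qed
    qed
    have "PP (x + 1 - k)" using IH[of "x + 1 - k"] xy ye N2 by linarith
    hence "\<exists>c1. reduced c1 \<and> nleaves c1 = x + 1 - k \<and> sp c1 k = L \<and> inn c1 k = insert L A1 - {L}"
      using PP_D[OF _ g1 L1 insertI1 kL] xL(1) kx by simp
    then obtain c1 where c1: "reduced c1" "nleaves c1 = x + 1 - k" "sp c1 k = L" "inn c1 k = insert L A1 - {L}"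
      by blast
    have "SS (y - x - 1)" using IH[of "y - x - 1"] xy ye kx N2 by linarith
    then obtain mids where mids: "\<forall>c\<in>set mids. reduced c" "snl mids = y - x - 1" "forest mids (x+1) = A2"
      using SS_D[OF _ g2 L2] by blast
    have "PP (k + N - y)" using IH[of "k + N - y"] xy kx N2 by linarith
    hence "\<exists>cm. reduced cm \<and> nleaves cm = k + N - y \<and> sp cm y = R \<and> inn cm y = insert R A3 - {R}"
      using PP_D[OF _ g3 L3 insertI1 yR(1)] eR xy ye by simp
    then obtain cm where cm: "reduced cm" "nleaves cm = k + N - y" "sp cm y = R" "inn cm y = insert R A3 - {R}"
      by blast
    define c where "c = Nd (c1 # mids @ [cm])"
    have "reduced c" using c1 cm mids unfolding c_def by (simp add: list_all_iff)
    moreover have "nleaves c = N" unfolding c_def nleaves_Nd3 using c1 cm mids kx xy ye by simp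
    moreover have off: "k + nleaves c1 + snl mids = y" using c1 mids kx xy by simp
    have "sp c k = T0" unfolding c_def sp_Nd3 off using c1 cm T0e by simp
    moreover have "inn c k = A - {T0}" unfolding c_def inn_Nd3 off AU using c1 cm mids LA1 RA3 kx by simp
    ultimately show ?thesis by blast
  qed
qed

theorem surj_all: "PP N \<and> SS N"
proof (induction N rule: less_induct)
  case (less N)
  have p: "PP N" using P_step less by blast
  have "SS N" by (rule S_step) (use less p in \<open>auto simp: le_less\<close>)
  thus ?case using p by simp
qed

lemma inj_tree: "reduced c \<Longrightarrow> reduced c' \<Longrightarrow> cmp c k = cmp c' k \<Longrightarrow> c = c'"
  using inj_tree_all by blast

lemma PST_D: "t \<in> PST n \<Longrightarrow> \<exists>cs. t = Nd cs \<and> cs \<noteq> [] \<and> last cs = Nd [] \<and>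
   (\<forall>c\<in>set (butlast cs). reduced c) \<and> snl (butlast cs) = n"
proof -
  assume "t \<in> PST n"
  hence r: "reduced t" and p: "prime_tree t" and w: "weight t = n" by (auto simp: PST_def)
  obtain cs where t: "t = Nd cs" by (cases t)
  have cs: "cs \<noteq> []" "last cs = Nd []" using p t by (auto simp: prime_tree_def)
  have "list_all reduced cs" using r t cs by auto
  hence "\<forall>c\<in>set (butlast cs). reduced c" by (auto simp: list_all_iff dest: in_set_butlastD)
  moreover have "snl (butlast cs) = n"
  proof -
    have "cs = butlast cs @ [Nd []]" using cs append_butlast_last_id by metis
    hence "snl cs = snl (butlast cs) + snl [Nd []]" by (metis snl_simps(3))
    hence "snl cs = snl (butlast cs) + 1" by simp
    thus ?thesis using w t cs by (simp add: weight_def nleaves_Nd)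
  qed
  ultimately show ?thesis using t cs by blast
qed

theorem mainTheorem4:
  fixes n :: nat
  assumes "1 \<le> n"
  shows "bij_betw phi (PST n) (Arr n)"
  unfolding bij_betw_def
proof (intro conjI)
  show "inj_on phi (PST n)"
  proof (rule inj_onI)
    fix t t' assume t: "t \<in> PST n" and t': "t' \<in> PST n" and e: "phi t = phi t'"
    obtain cs where cs: "t = Nd cs" "cs \<noteq> []" "last cs = Nd []" "\<forall>c\<in>set (butlast cs). reduced c"
      using PST_D[OF t] by blast
    obtain cs' where cs': "t' = Nd cs'" "cs' \<noteq> []" "last cs' = Nd []" "\<forall>c\<in>set (butlast cs'). reduced c"
      using PST_D[OF t'] by blast
    have "forest (butlast cs) 1 = forest (butlast cs') 1" using e cs cs' phi_eq by simp
    moreover have "\<forall>c\<in>set (butlast cs). reduced c \<and> (\<forall>c' k. reduced c' \<longrightarrow> cmp c k = cmp c' k \<longrightarrow> c = c')"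
      using cs(4) inj_tree by blast
    ultimately have "butlast cs = butlast cs'" using inj_list cs'(4) by blast
    hence "cs = cs'" using cs cs' by (metis append_butlast_last_id)
    thus "t = t'" using cs cs' by simp
  qed
next
  show "phi ` PST n = Arr n"
  proof
    show "phi ` PST n \<subseteq> Arr n"
    proof
      fix A assume "A \<in> phi ` PST n"
      then obtain t where t: "t \<in> PST n" "A = phi t" by blast
      obtain cs where cs: "t = Nd cs" "cs \<noteq> []" "last cs = Nd []" "\<forall>c\<in>set (butlast cs). reduced c" "snl (butlast cs) = n"
        using PST_D[OF t(1)] by blast
      have A: "A = forest (butlast cs) 1" using t cs phi_eq by simp
      have "\<forall>c\<in>set (butlast cs). \<forall>k. Fp c k" using cs(4) forward by blast
      hence "gd A" "LV A = {1..<1 + n}" using forest_good[of "butlast cs" 1] A cs(5) by auto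
      moreover have "{1..<1 + n} = {1..n}" by auto
      ultimately show "A \<in> Arr n" by (simp add: Arr_def arrangement_gd)
    qed
  next
    show "Arr n \<subseteq> phi ` PST n"
    proof
      fix A assume "A \<in> Arr n"
      hence g: "gd A" and L: "LV A = {1..<1 + n}" by (auto simp: Arr_def arrangement_gd)
      obtain cs where cs: "\<forall>c\<in>set cs. reduced c" "snl cs = n" "forest cs 1 = A"
        using SS_D[OF _ g L] surj_all by blast
      have ne: "cs \<noteq> []" using cs assms by auto
      define t where "t = Nd (cs @ [Nd []])"
      have "phi t = A" unfolding t_def using phi_eq[of "cs @ [Nd []]"] cs by simp
      moreover have "t \<in> PST n"
      proof -
        have "reduced t" unfolding t_def using ne cs(1) by (cases cs) (auto simp: list_all_iff)
        moreover have "nleaves t = n + 1" unfolding t_def using cs(2) by (simp add: nleaves_Nd)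
        ultimately show ?thesis using assms unfolding PST_def prime_tree_def weight_def t_def by simp
      qed
      ultimately show "A \<in> phi ` PST n" by blast
    qed
  qed
qed

end
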